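(* Let $(\mathbb{K},\oplus,\otimes,\bar 0,\bar 1)$ be a monotonic negative semiring with respect to a total order $\preceq$, and let $A=(Q,s,\Sigma,\omega,\delta)$ be an acyclic weighted finite-state acceptor over it, with backward shortest distance $\beta$ computed in $(\mathbb{K},\oplus,\otimes,\bar 0,\bar 1)$. Then for every transition $(q,z,k,r)\in\delta$ we have $\beta(q)\preceq k\otimes\beta(r)$; i.e. $\beta$ is a consistent heuristic for A* search over the companion semiring $(\mathbb{K},\widehat\oplus,\otimes,\bar 0,\bar 1)$.
   Context: A semiring $(\mathbb{K},\oplus,\otimes,\bar 0,\bar 1)$ consists of a commutative monoid $(\mathbb{K},\oplus)$ with identity $\bar 0$ and a monoid $(\mathbb{K},\otimes)$ with identity $\bar 1$, with $\otimes$ distributing over $\oplus$ on both sides and $\bar 0$ annihilating for $\otimes$. A semiring with a total order $\preceq$ on $\mathbb{K}$ is monotonic if for all $a,b,c$, $a\preceq b$ implies $a\oplus c\preceq b\oplus c$, $a\otimes c\preceq b\otimes c$, $c\otimes a\preceq c\otimes b$; it is negative if $\bar 1\preceq\bar 0$. The companion semiring is $(\mathbb{K},\widehat\oplus,\otimes,\bar 0,\bar 1)$ where $a\,\widehat\oplus\, b=a$ if $a\preceq b$ and $b$ otherwise. A weighted finite-state acceptor is a tuple $(Q,s,\Sigma,\omega,\delta)$ with $Q$ a finite set of states, $s\in Q$ initial, $\Sigma$ a finite alphabet, $\omega:Q\to\mathbb{K}$ the final weight function, and $\delta\subseteq Q\times\Sigma\times\mathbb{K}\times Q$ a finite transition relation;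 it is acyclic if there is an ordering of $Q$ with $q$ strictly before $r$ for every $(q,z,k,r)\in\delta$. Let $F=\{q:\omega(q)\neq\bar 0\}$. A path from $q_0$ to $q_n$ is a sequence of transitions $(q_{i-1},z_i,k_i,q_i)\in\delta$, $i=1,\dots,n$ ($n\ge0$). The backward shortest distance is $\beta(q)=\bigoplus_{f\in F}\bigoplus_{p\text{ path from }q\text{ to }f}(k_1\otimes\cdots\otimes k_n\otimes\omega(f))$, an empty sum being $\bar 0$. An A* heuristic $\digamma:Q\to\mathbb{K}$ is consistent if $\digamma(q)\preceq k\otimes\digamma(r)$ for every transition $(q,z,k,r)\in\delta$. *)

theory Defs
  imports Main
begin

text \<open>A semiring given by explicit operations on a carrier type 'k
  (the whole type is the carrier K).\<close>
definition is_semiring :: "('k \<Rightarrow> 'k \<Rightarrow> 'k) \<Rightarrow> ('k \<Rightarrow> 'k \<Rightarrow> 'k) \<Rightarrow> 'k \<Rightarrow> 'k \<Rightarrow> bool" where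
  "is_semiring add mul zr un \<longleftrightarrow>
     (\<forall>a b c. add (add a b) c = add a (add b c)) \<and>
     (\<forall>a b. add a b = add b a) \<and>
     (\<forall>a. add zr a = a) \<and>
     (\<forall>a b c. mul (mul a b) c = mul a (mul b c)) \<and>
     (\<forall>a. mul un a = a \<and> mul a un = a) \<and>
     (\<forall>a b c. mul a (add b c) = add (mul a b) (mul a c)) \<and>
     (\<forall>a b c. mul (add a b) c = add (mul a c) (mul b c)) \<and>
     (\<forall>a. mul zr a = zr \<and> mul a zr = zr)"

definition is_total_order :: "('k \<Rightarrow> 'k \<Rightarrow> bool) \<Rightarrow> bool" where
  "is_total_order le \<longleftrightarrow>
     (\<forall>a. le a a) \<and>
     (\<forall>a b. le a b \<and> le b a \<longrightarrow> a = b) \<and>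
     (\<forall>a b c. le a b \<and> le b c \<longrightarrow> le a c) \<and>
     (\<forall>a b. le a b \<or> le b a)"

definition monotonic_semiring ::
  "('k \<Rightarrow> 'k \<Rightarrow> bool) \<Rightarrow> ('k \<Rightarrow> 'k \<Rightarrow> 'k) \<Rightarrow> ('k \<Rightarrow> 'k \<Rightarrow> 'k) \<Rightarrow> 'k \<Rightarrow> 'k \<Rightarrow> bool" where
  "monotonic_semiring le add mul zr un \<longleftrightarrow>
     is_semiring add mul zr un \<and> is_total_order le \<and>
     (\<forall>a b c. le a b \<longrightarrow>
        le (add a c) (add b c) \<and> le (mul a c) (mul b c) \<and> le (mul c a) (mul c b))"

definition negative_semiring :: "('k \<Rightarrow> 'k \<Rightarrow> bool) \<Rightarrow> 'k \<Rightarrow> 'k \<Rightarrow> bool" where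
  "negative_semiring le zr un \<longleftrightarrow> le un zr"

definition is_wfsa :: "'q set \<Rightarrow> 'q \<Rightarrow> 'z set \<Rightarrow> ('q \<Rightarrow> 'k) \<Rightarrow> ('q \<times> 'z \<times> 'k \<times> 'q) set \<Rightarrow> bool" where
  "is_wfsa Q s Sig omega delta \<longleftrightarrow>
     finite Q \<and> s \<in> Q \<and> finite Sig \<and> finite delta \<and>
     delta \<subseteq> Q \<times> Sig \<times> UNIV \<times> Q"

definition acyclic_wfsa :: "'q set \<Rightarrow> ('q \<times> 'z \<times> 'k \<times> 'q) set \<Rightarrow> bool" where
  "acyclic_wfsa Q delta \<longleftrightarrow>
     (\<exists>rank :: 'q \<Rightarrow> nat. inj_on rank Q \<and>
        (\<forall>q z k r. (q, z, k, r) \<in> delta \<longrightarrow> rank q < rank r))"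

definition final_states :: "'q set \<Rightarrow> ('q \<Rightarrow> 'k) \<Rightarrow> 'k \<Rightarrow> 'q set" where
  "final_states Q omega zr = {q \<in> Q. omega q \<noteq> zr}"

fun is_path :: "('q \<times> 'z \<times> 'k \<times> 'q) set \<Rightarrow> 'q \<Rightarrow> ('q \<times> 'z \<times> 'k \<times> 'q) list \<Rightarrow> 'q \<Rightarrow> bool" where
  "is_path delta q [] r \<longleftrightarrow> q = r"
| "is_path delta q ((q', z, k, r') # ts) r \<longleftrightarrow>
     (q', z, k, r') \<in> delta \<and> q' = q \<and> is_path delta r' ts r"

definition path_weight :: "('k \<Rightarrow> 'k \<Rightarrow> 'k) \<Rightarrow> ('q \<times> 'z \<times> 'k \<times> 'q) list \<Rightarrow> 'k \<Rightarrow> 'k" where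
  "path_weight mul ts w = foldr (\<lambda>(_, _, k, _) acc. mul k acc) ts w"

text \<open>Finite (+)-sum over a set (empty or infinite sum is zr).\<close>
definition ssum :: "('k \<Rightarrow> 'k \<Rightarrow> 'k) \<Rightarrow> 'k \<Rightarrow> ('a \<Rightarrow> 'k) \<Rightarrow> 'a set \<Rightarrow> 'k" where
  "ssum add zr g A = (if finite A then Finite_Set.fold (\<lambda>x acc. add (g x) acc) zr A else zr)"

definition backward_distance ::
  "('k \<Rightarrow> 'k \<Rightarrow> 'k) \<Rightarrow> ('k \<Rightarrow> 'k \<Rightarrow> 'k) \<Rightarrow> 'k \<Rightarrow> 'q set \<Rightarrow> ('q \<Rightarrow> 'k)
     \<Rightarrow> ('q \<times> 'z \<times> 'k \<times> 'q) set \<Rightarrow> 'q \<Rightarrow> 'k" where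
  "backward_distance add mul zr Q omega delta q =
     ssum add zr (\<lambda>(ts, f). path_weight mul ts (omega f))
       {(ts, f). f \<in> final_states Q omega zr \<and> is_path delta q ts f}"

definition consistent_heuristic ::
  "('k \<Rightarrow> 'k \<Rightarrow> bool) \<Rightarrow> ('k \<Rightarrow> 'k \<Rightarrow> 'k) \<Rightarrow> ('q \<times> 'z \<times> 'k \<times> 'q) set \<Rightarrow> ('q \<Rightarrow> 'k) \<Rightarrow> bool" where
  "consistent_heuristic le mul delta h \<longleftrightarrow>
     (\<forall>q z k r. (q, z, k, r) \<in> delta \<longrightarrow> le (h q) (mul k (h r)))"

end

theory Submission
  imports Defs
begin

lemma path_props:
  assumes "\<forall>q z k r. (q, z, k, r) \<in> delta \<longrightarrow> rank q < (rank r :: nat)"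
  shows "is_path delta q ts f \<Longrightarrow> set ts \<subseteq> delta \<and> distinct ts \<and> (\<forall>t\<in>set ts. rank q \<le> rank (fst t))"
proof (induction ts arbitrary: q)
  case Nil
  then show ?case by simp
next
  case (Cons t ts)
  obtain q' z k r' where t: "t = (q', z, k, r')" by (cases t) auto
  from Cons.prems t have d: "(q', z, k, r') \<in> delta" and qq: "q' = q" and p: "is_path delta r' ts f" by auto
  from d assms have lt: "rank q' < rank r'" by blast
  from Cons.IH[OF p] have ih: "set ts \<subseteq> delta \<and> distinct ts \<and> (\<forall>t\<in>set ts. rank r' \<le> rank (fst t))" .
  have "t \<notin> set ts" using ih lt t by fastforce
  then show ?case using ih d t qq lt by fastforce
qed

theorem theorem2:
  fixes le :: "'k \<Rightarrow> 'k \<Rightarrow> bool"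
    and add mul :: "'k \<Rightarrow> 'k \<Rightarrow> 'k"
    and zr un :: 'k
    and Q :: "'q set" and s :: 'q and Sig :: "'z set"
    and omega :: "'q \<Rightarrow> 'k" and delta :: "('q \<times> 'z \<times> 'k \<times> 'q) set"
  assumes "monotonic_semiring le add mul zr un"
    and "negative_semiring le zr un"
    and "is_wfsa Q s Sig omega delta"
    and "acyclic_wfsa Q delta"
  shows "\<forall>q z k r. (q, z, k, r) \<in> delta \<longrightarrow>
           le (backward_distance add mul zr Q omega delta q)
              (mul k (backward_distance add mul zr Q omega delta r))"
proof (intro allI impI)
  fix q z k r
  assume tr: "(q, z, k, r) \<in> delta"
  have sr: "is_semiring add mul zr un" and to: "is_total_order le"
    and mono: "\<forall>a b c. le a b \<longrightarrow> le (add a c) (add b c) \<and> le (mul a c) (mul b c) \<and> le (mul c a) (mul c b)"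
    using assms(1) unfolding monotonic_semiring_def by auto
  have neg: "le un zr" using assms(2) unfolding negative_semiring_def .
  have refl: "\<And>a. le a a" and trans: "\<And>a b c. le a b \<Longrightarrow> le b c \<Longrightarrow> le a c"
    using to unfolding is_total_order_def by blast+
  have assoc: "\<And>a b c. add (add a b) c = add a (add b c)" and comm: "\<And>a b. add a b = add b a"
    and neut: "\<And>a. add zr a = a" and lun: "\<And>a. mul un a = a"
    and distl: "\<And>a b c. mul a (add b c) = add (mul a b) (mul a c)"
    and z1: "\<And>a. mul zr a = zr" and z2: "\<And>a. mul a zr = zr"
    using sr unfolding is_semiring_def by auto
  interpret S: comm_monoid_set add zr
    by unfold_locales (metis assoc comm, metis comm, metis comm neut)
  have le0: "\<And>y. le y zr"
  proof -
    fix y show "le y zr" using mono neg lun z1 by metis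
  qed
  have addle: "\<And>x y. le (add x y) x"
  proof -
    fix x y
    have "le (add y x) (add zr x)" using mono le0 by blast
    then show "le (add x y) x" using comm neut by metis
  qed
  have Fdist: "\<And>A g. finite A \<Longrightarrow> S.F (\<lambda>x. mul k (g x)) A = mul k (S.F g A)"
  proof -
    fix A :: "'b set" and g
    assume "finite A"
    then show "S.F (\<lambda>x. mul k (g x)) A = mul k (S.F g A)"
      by (induction A rule: finite_induct) (auto simp: z2 distl)
  qed
  have ssum_eq: "\<And>g A. ssum add zr g A = S.F g A"
    unfolding ssum_def S.eq_fold by (simp add: comp_def)
  obtain rank :: "'q \<Rightarrow> nat" where rk: "\<forall>q z k r. (q, z, k, r) \<in> delta \<longrightarrow> rank q < rank r"
    using assms(4) unfolding acyclic_wfsa_def by blast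
  have fin: "finite Q" "finite delta" using assms(3) unfolding is_wfsa_def by auto
  define P where "P x = {(ts, f). f \<in> final_states Q omega zr \<and> is_path delta x ts f}" for x
  have finP: "finite (P x)" for x
  proof (rule finite_subset)
    show "P x \<subseteq> {ts. set ts \<subseteq> delta \<and> distinct ts} \<times> Q"
      using path_props[OF rk] unfolding P_def final_states_def by blast
    show "finite ({ts. set ts \<subseteq> delta \<and> distinct ts} \<times> Q)"
      using fin finite_subset_distinct by blast
  qed
  define g where "g = (\<lambda>(ts :: ('q \<times> 'z \<times> 'k \<times> 'q) list, f :: 'q). path_weight mul ts (omega f))"
  define h where "h = (\<lambda>(ts :: ('q \<times> 'z \<times> 'k \<times> 'q) list, f :: 'q). ((q, z, k, r) # ts, f))"
  have bd: "backward_distance add mul zr Q omega delta x = S.F g (P x)" for x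
    unfolding backward_distance_def ssum_eq P_def g_def by simp
  have sub: "h ` P r \<subseteq> P q" using tr unfolding h_def P_def by auto
  have inj: "inj_on h (P r)" unfolding h_def inj_on_def by auto
  have gh: "g \<circ> h = (\<lambda>x. mul k (g x))"
    unfolding g_def h_def path_weight_def by (auto simp: fun_eq_iff)
  have "S.F g (P q) = add (S.F g (P q - h ` P r)) (S.F g (h ` P r))"
    using S.subset_diff[OF sub finP] .
  also have "\<dots> = add (S.F g (h ` P r)) (S.F g (P q - h ` P r))" by (rule comm)
  finally have "le (S.F g (P q)) (S.F g (h ` P r))" using addle by simp
  moreover have "S.F g (h ` P r) = mul k (S.F g (P r))"
    unfolding S.reindex[OF inj] gh by (rule Fdist[OF finP])
  ultimately show "le (backward_distance add mul zr Q omega delta q)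
              (mul k (backward_distance add mul zr Q omega delta r))" by (simp add: bd)
qed

end
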